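(* Let $W(x,y,z)\in F(x,y,z)$ be one of the words $yx^{-1}y$, $y^{-s}xy^{s}$, $yz^{-s}y^{-1}xz^{s}$, $yz^{-s}xy^{-1}z^{s}$, $z^{-s}y^{-1}xz^{s}y$, $z^{-s}xy^{-1}z^{s}y$, where $s\in\mathbb{Z}$. Then for every group $G$ and every element $c\in G$, the algebraic system $(G,*_{W,c})$ is a quandle.
   Context: A quandle is a set $Q$ with a binary operation $(x,y)\mapsto x*y$ satisfying: (q1) $x*x=x$ for all $x\in Q$; (q2) for every $x\in Q$ the map $y\mapsto y*x$ is a bijection of $Q$; (q3) $(x*y)*z=(x*z)*(y*z)$ for all $x,y,z\in Q$. For a word $W(x,y,z)$ in the free group $F(x,y,z)$, a group $G$ and a fixed element $c\in G$, the binary operation $*_{W,c}$ on $G$ is defined by $a*_{W,c}b=W(a,b,c)$ (substitute $a$ for $x$, $b$ for $y$, $c$ for $z$ and evaluate in $G$). *)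

theory Defs
  imports "HOL-Algebra.Group"
begin

definition is_quandle :: "'a set \<Rightarrow> ('a \<Rightarrow> 'a \<Rightarrow> 'a) \<Rightarrow> bool" where
  "is_quandle Q op \<longleftrightarrow>
     (\<forall>x\<in>Q. \<forall>y\<in>Q. op x y \<in> Q) \<and>
     (\<forall>x\<in>Q. op x x = x) \<and>
     (\<forall>x\<in>Q. bij_betw (\<lambda>y. op y x) Q Q) \<and>
     (\<forall>x\<in>Q. \<forall>y\<in>Q. \<forall>z\<in>Q. op (op x y) z = op (op x z) (op y z))"

datatype word = Wa | Wb | Wc | Wd | We | Wf

text \<open>Evaluation W(a,b,c) of a word in the group G (x := a, y := b, z := c).\<close>
fun word_eval :: "('g, 'm) monoid_scheme \<Rightarrow> word \<Rightarrow> int \<Rightarrow> 'g \<Rightarrow> 'g \<Rightarrow> 'g \<Rightarrow> 'g" where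
  "word_eval G Wa s a b c = b \<otimes>\<^bsub>G\<^esub> inv\<^bsub>G\<^esub> a \<otimes>\<^bsub>G\<^esub> b"
| "word_eval G Wb s a b c = b [^]\<^bsub>G\<^esub> (-s) \<otimes>\<^bsub>G\<^esub> a \<otimes>\<^bsub>G\<^esub> b [^]\<^bsub>G\<^esub> s"
| "word_eval G Wc s a b c = b \<otimes>\<^bsub>G\<^esub> c [^]\<^bsub>G\<^esub> (-s) \<otimes>\<^bsub>G\<^esub> inv\<^bsub>G\<^esub> b \<otimes>\<^bsub>G\<^esub> a \<otimes>\<^bsub>G\<^esub> c [^]\<^bsub>G\<^esub> s"
| "word_eval G Wd s a b c = b \<otimes>\<^bsub>G\<^esub> c [^]\<^bsub>G\<^esub> (-s) \<otimes>\<^bsub>G\<^esub> a \<otimes>\<^bsub>G\<^esub> inv\<^bsub>G\<^esub> b \<otimes>\<^bsub>G\<^esub> c [^]\<^bsub>G\<^esub> s"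
| "word_eval G We s a b c = c [^]\<^bsub>G\<^esub> (-s) \<otimes>\<^bsub>G\<^esub> inv\<^bsub>G\<^esub> b \<otimes>\<^bsub>G\<^esub> a \<otimes>\<^bsub>G\<^esub> c [^]\<^bsub>G\<^esub> s \<otimes>\<^bsub>G\<^esub> b"
| "word_eval G Wf s a b c = c [^]\<^bsub>G\<^esub> (-s) \<otimes>\<^bsub>G\<^esub> a \<otimes>\<^bsub>G\<^esub> inv\<^bsub>G\<^esub> b \<otimes>\<^bsub>G\<^esub> c [^]\<^bsub>G\<^esub> s \<otimes>\<^bsub>G\<^esub> b"

end

theory Submission
  imports Defs
begin

context group
begin
lemma canc1: "x \<in> carrier G \<Longrightarrow> y \<in> carrier G \<Longrightarrow> x \<otimes> (inv x \<otimes> y) = y"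
  by (simp add: m_assoc[symmetric])
lemma canc2: "x \<in> carrier G \<Longrightarrow> y \<in> carrier G \<Longrightarrow> inv x \<otimes> (x \<otimes> y) = y"
  by (simp add: m_assoc[symmetric])
lemmas nf = m_assoc inv_mult_group inv_inv l_inv r_inv l_one r_one canc1 canc2 int_pow_neg

lemma pow_comm: "x \<in> carrier G \<Longrightarrow> x \<otimes> x [^] (s::int) = x [^] s \<otimes> x"
  using int_pow_mult[of x 1 s] int_pow_mult[of x s 1] by (simp add: add.commute)

lemma conj_pow: assumes "a \<in> carrier G" "y \<in> carrier G"
  shows "(inv a \<otimes> y \<otimes> a) [^] (s::int) = inv a \<otimes> y [^] s \<otimes> a"
proof -
  have "(\<lambda>y. inv a \<otimes> y \<otimes> a) \<in> hom G G"
    using assms by (auto simp: hom_def nf)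
  from hom_int_pow[OF this assms(2) is_group is_group] show ?thesis by simp
qed

lemma bij_ab: "a \<in> carrier G \<Longrightarrow> b \<in> carrier G \<Longrightarrow> bij_betw (\<lambda>x. a \<otimes> x \<otimes> b) (carrier G) (carrier G)"
  by (rule bij_betw_byWitness[where f'="\<lambda>x. inv a \<otimes> x \<otimes> inv b"]) (auto simp: nf)

lemma bij_ab2: "a \<in> carrier G \<Longrightarrow> b \<in> carrier G \<Longrightarrow> d \<in> carrier G \<Longrightarrow> bij_betw (\<lambda>x. a \<otimes> x \<otimes> b \<otimes> d) (carrier G) (carrier G)"
  using bij_ab[of a "b \<otimes> d"] by (rule bij_betw_cong[THEN iffD1, rotated]) (auto simp: m_assoc)

lemma bij_ab3: "a \<in> carrier G \<Longrightarrow> b \<in> carrier G \<Longrightarrow> d \<in> carrier G \<Longrightarrow> e \<in> carrier G \<Longrightarrow> bij_betw (\<lambda>x. a \<otimes> x \<otimes> b \<otimes> d \<otimes> e) (carrier G) (carrier G)"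
  using bij_ab[of a "b \<otimes> d \<otimes> e"] by (rule bij_betw_cong[THEN iffD1, rotated]) (auto simp: m_assoc)

lemma bij_core: "a \<in> carrier G \<Longrightarrow> bij_betw (\<lambda>x. a \<otimes> inv x \<otimes> a) (carrier G) (carrier G)"
  by (rule bij_betw_byWitness[where f'="\<lambda>x. a \<otimes> inv x \<otimes> a"]) (auto simp: nf)
end

theorem mainTheorem2:
  fixes G :: "('g, 'm) monoid_scheme" and W :: word and s :: int and c :: 'g
  assumes "group G" and "c \<in> carrier G"
  shows "is_quandle (carrier G) (\<lambda>a b. word_eval G W s a b c)"
proof -
  interpret group G by fact
  have t: "c [^]\<^bsub>G\<^esub> s \<in> carrier G" using assms(2) by simp
  show ?thesis
  proof (cases W)
    case Wa thus ?thesis using assms(2) t unfolding is_quandle_def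
      by (auto simp: nf intro: bij_core)
  next
    case Wb
    show ?thesis
    proof -
      have 1: "\<And>x. x \<in> carrier G \<Longrightarrow> inv\<^bsub>G\<^esub> (x [^]\<^bsub>G\<^esub> s) \<otimes>\<^bsub>G\<^esub> (x \<otimes>\<^bsub>G\<^esub> x [^]\<^bsub>G\<^esub> s) = x"
        by (simp add: pow_comm m_assoc[symmetric])
      have 2: "y \<in> carrier G \<Longrightarrow> z \<in> carrier G \<Longrightarrow>
        (inv\<^bsub>G\<^esub> (z [^]\<^bsub>G\<^esub> s) \<otimes>\<^bsub>G\<^esub> (y \<otimes>\<^bsub>G\<^esub> z [^]\<^bsub>G\<^esub> s)) [^]\<^bsub>G\<^esub> s = inv\<^bsub>G\<^esub> (z [^]\<^bsub>G\<^esub> s) \<otimes>\<^bsub>G\<^esub> (y [^]\<^bsub>G\<^esub> s \<otimes>\<^bsub>G\<^esub> z [^]\<^bsub>G\<^esub> s)"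
        for y z using conj_pow[of "z [^]\<^bsub>G\<^esub> s" y s] by (simp add: m_assoc)
      show ?thesis using Wb assms(2) t unfolding is_quandle_def
        by (auto simp: 1 2 nf intro!: bij_ab bij_ab2 bij_ab3)
    qed
  next
    case Wc thus ?thesis using assms(2) t unfolding is_quandle_def
      by (auto simp: nf intro!: bij_ab bij_ab2 bij_ab3)
  next
    case Wd thus ?thesis using assms(2) t unfolding is_quandle_def
      by (auto simp: nf intro!: bij_ab bij_ab2 bij_ab3)
  next
    case We thus ?thesis using assms(2) t unfolding is_quandle_def
      by (auto simp: nf intro!: bij_ab bij_ab2 bij_ab3)
  next
    case Wf thus ?thesis using assms(2) t unfolding is_quandle_def
      by (auto simp: nf intro!: bij_ab bij_ab2 bij_ab3)
  qed
qed

end
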